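(* Let $T=T(n,a,b)$ with $a\ge 0$, $b\ge a+2$ and $2(a+b)<n-1$, let $\ell=n-a-b$ and $x=x(T)$. Suppose $b<\frac{\ell}{2}$. Then (i) if $a\ge1$, then for $i=1,\dots,a$: $x_{v_i}-x_{v_{\ell+1-i}}<x_{v_{i+1}}-x_{v_{\ell-i}}$ and $x_{w_i}-x_{w_{\ell-i}}<x_{v_{i+1}}-x_{v_{\ell-i}}$; (ii) $x_{v_{a+1+i}}-x_{v_{\ell-b+1-i}}>x_{v_{a+2+i}}-x_{v_{\ell-b-i}}>0$ for $i=1,\dots,\lfloor\frac{\ell-b-a-1}{2}\rfloor-1$; (iii) $x_{v_{\ell-b+1}}<x_{v_{\ell-a}}$.
   Context: Hypergraphs have edges that are vertex subsets of size at least two; distance $d_T(u,v)$ in a hypertree is the length of a shortest loose path (an alternating sequence of distinct vertices and distinct edges $(v_0,e_1,v_1,\dots,e_p,v_p)$ with $v_{i-1},v_i\in e_i$ and non-consecutive edges disjoint). $D(T)$ is the distance matrix, $\rho(T)$ its largest eigenvalue, and $x(T)$ the unit positive eigenvector for $\rho(T)$ (distance Perron vector), with entries $x_v$ indexed by vertices. For integers $n,a,b$ with $0\le a\le b$ and $a+b\le\lfloor\frac{n-1}{2}\rfloor$, put $\ell=n-a-b$ and $I=\{1,\dots,a\}\cup\{\ell-b,\dots,\ell-1\}$; $T(n,a,b)$ is the hypertree with vertex set $\{v_1,\dots,v_\ell\}\cup\{w_i:i\in I\}$ and edges $\{v_i,w_i,v_{i+1}\}$ for $i\in I$ and $\{v_i,v_{i+1}\}$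 for $i\in\{1,\dots,\ell-1\}\setminus I$. *)

theory Defs
  imports Complex_Main
begin

text \<open>A hypergraph is given by its edge set E (edges are vertex sets of size at least two).\<close>

definition loose_path :: "'v set set \<Rightarrow> 'v list \<Rightarrow> 'v set list \<Rightarrow> bool" where
  "loose_path E vs es \<longleftrightarrow>
     length vs = Suc (length es) \<and> distinct vs \<and> distinct es \<and> set es \<subseteq> E \<and>
     (\<forall>i < length es. vs ! i \<in> es ! i \<and> vs ! Suc i \<in> es ! i) \<and>
     (\<forall>i < length es. \<forall>j < length es. Suc i < j \<longrightarrow> es ! i \<inter> es ! j = {})"

definition hdist :: "'v set set \<Rightarrow> 'v \<Rightarrow> 'v \<Rightarrow> nat" where
  "hdist E u v = (LEAST p. \<exists>vs es. loose_path E vs es \<and> length es = p \<and>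
                                   hd vs = u \<and> last vs = v)"

definition dist_matrix :: "'v set set \<Rightarrow> 'v \<Rightarrow> 'v \<Rightarrow> real" where
  "dist_matrix E u v = real (hdist E u v)"

definition is_eigenvalue :: "'v set \<Rightarrow> ('v \<Rightarrow> 'v \<Rightarrow> real) \<Rightarrow> real \<Rightarrow> bool" where
  "is_eigenvalue Vs M \<mu> \<longleftrightarrow> (\<exists>y. (\<exists>v\<in>Vs. y v \<noteq> 0) \<and>
      (\<forall>v\<in>Vs. (\<Sum>u\<in>Vs. M v u * y u) = \<mu> * y v))"

definition largest_eigenvalue :: "'v set \<Rightarrow> ('v \<Rightarrow> 'v \<Rightarrow> real) \<Rightarrow> real \<Rightarrow> bool" where
  "largest_eigenvalue Vs M \<rho> \<longleftrightarrow> is_eigenvalue Vs M \<rho> \<and> (\<forall>\<mu>. is_eigenvalue Vs M \<mu> \<longrightarrow> \<mu> \<le> \<rho>)"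

text \<open>x is the unit positive eigenvector for the largest eigenvalue (the Perron vector);
only its values on the vertex set are relevant.\<close>
definition perron_vector :: "'v set \<Rightarrow> ('v \<Rightarrow> 'v \<Rightarrow> real) \<Rightarrow> ('v \<Rightarrow> real) \<Rightarrow> bool" where
  "perron_vector Vs M x \<longleftrightarrow> (\<exists>\<rho>. largest_eigenvalue Vs M \<rho> \<and>
      (\<forall>v\<in>Vs. x v > 0) \<and> (\<Sum>v\<in>Vs. (x v)\<^sup>2) = 1 \<and>
      (\<forall>v\<in>Vs. (\<Sum>u\<in>Vs. M v u * x u) = \<rho> * x v))"

datatype vtx = V nat | W nat

definition tI :: "nat \<Rightarrow> nat \<Rightarrow> nat \<Rightarrow> nat set" where
  "tI n a b = {1..a} \<union> {n - a - b - b .. n - a - b - 1}"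

definition tVerts :: "nat \<Rightarrow> nat \<Rightarrow> nat \<Rightarrow> vtx set" where
  "tVerts n a b = V ` {1..n - a - b} \<union> W ` tI n a b"

definition tEdges :: "nat \<Rightarrow> nat \<Rightarrow> nat \<Rightarrow> vtx set set" where
  "tEdges n a b = (\<lambda>i. {V i, W i, V (Suc i)}) ` tI n a b
                \<union> (\<lambda>i. {V i, V (Suc i)}) ` ({1..< n - a - b} - tI n a b)"

end

theory Submission
  imports Defs
begin

fun dd :: "vtx \<Rightarrow> vtx \<Rightarrow> nat" where
  "dd (V j) (V k) = (if j \<le> k then k - j else j - k)"
| "dd (V j) (W i) = (if i < j then j - i else Suc i - j)"
| "dd (W i) (V j) = (if i < j then j - i else Suc i - j)"
| "dd (W i) (W k) = (if i = k then 0 else if i \<le> k then Suc (k - i) else Suc (i - k))"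

lemma dd_self[simp]: "dd u u = 0" by (cases u) auto

lemma dd_lip:
  assumes "e \<in> tEdges n a b" "p \<in> e" "q \<in> e"
  shows "dd w p \<le> dd w q + 1"
  using assms unfolding tEdges_def
  by (cases w) (auto split: if_splits)

lemma lower_aux:
  assumes "loose_path (tEdges n a b) vs es"
  shows "m \<le> length es \<Longrightarrow> dd (hd vs) (vs ! m) \<le> m"
proof (induction m)
  case 0
  from assms have "vs \<noteq> []" unfolding loose_path_def by auto
  then show ?case by (simp add: hd_conv_nth)
next
  case (Suc m)
  then have m: "m < length es" by simp
  from assms m have e: "es ! m \<in> tEdges n a b" "vs ! m \<in> es ! m" "vs ! Suc m \<in> es ! m"
    unfolding loose_path_def by auto
  have "dd (hd vs) (vs ! Suc m) \<le> dd (hd vs) (vs ! m) + 1"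
    using dd_lip[OF e(1) e(3) e(2)] by simp
  with Suc m show ?case by simp
qed

lemma lower:
  assumes "loose_path (tEdges n a b) vs es"
  shows "dd (hd vs) (last vs) \<le> length es"
proof -
  from assms have l: "length vs = Suc (length es)" unfolding loose_path_def by auto
  then have "vs \<noteq> []" by auto
  with l have "last vs = vs ! length es" by (simp add: last_conv_nth)
  then show ?thesis using lower_aux[OF assms, of "length es"] by simp
qed

lemma loose_path_rev:
  assumes "loose_path E vs es"
  shows "loose_path E (rev vs) (rev es)"
proof -
  let ?L = "length es"
  from assms have l: "length vs = Suc ?L" and d: "distinct vs" "distinct es" "set es \<subseteq> E"
    and c: "\<forall>i < ?L. vs ! i \<in> es ! i \<and> vs ! Suc i \<in> es ! i"
    and dj: "\<forall>i < ?L. \<forall>j < ?L. Suc i < j \<longrightarrow> es ! i \<inter> es ! j = {}"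
    unfolding loose_path_def by auto
  have c2: "rev vs ! i \<in> rev es ! i \<and> rev vs ! Suc i \<in> rev es ! i" if "i < ?L" for i
  proof -
    have "rev es ! i = es ! (?L - 1 - i)" using that by (simp add: rev_nth)
    moreover have "rev vs ! i = vs ! Suc (?L - 1 - i)" using that l by (simp add: rev_nth Suc_diff_Suc)
    moreover have "rev vs ! Suc i = vs ! (?L - 1 - i)" using that l by (simp add: rev_nth)
    ultimately show ?thesis using c that by auto
  qed
  have dj2: "rev es ! i \<inter> rev es ! j = {}" if "i < ?L" "j < ?L" "Suc i < j" for i j
  proof -
    have "rev es ! i = es ! (?L - 1 - i)" "rev es ! j = es ! (?L - 1 - j)" using that by (simp_all add: rev_nth)
    moreover have "es ! (?L - 1 - j) \<inter> es ! (?L - 1 - i) = {}" using dj that by auto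
    ultimately show ?thesis by auto
  qed
  show ?thesis unfolding loose_path_def using l d c2 dj2 by auto
qed

definition Eg :: "nat \<Rightarrow> nat \<Rightarrow> nat \<Rightarrow> nat \<Rightarrow> vtx set" where
  "Eg n a b m = (if m \<in> tI n a b then {V m, W m, V (Suc m)} else {V m, V (Suc m)})"

definition pv :: "bool \<Rightarrow> bool \<Rightarrow> nat \<Rightarrow> nat \<Rightarrow> vtx list" where
  "pv sw ew j k = map (\<lambda>m. if sw \<and> m = j then W j else if ew \<and> m = k then W (k - 1) else V m) [j..<Suc k]"

lemma Eg_in: "1 \<le> m \<Longrightarrow> m < n - a - b \<Longrightarrow> Eg n a b m \<in> tEdges n a b"
  unfolding Eg_def tEdges_def by auto

lemma Eg_inj: "Eg n a b m = Eg n a b m' \<Longrightarrow> m = m'"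
proof -
  assume h: "Eg n a b m = Eg n a b m'"
  have "V m \<in> Eg n a b m'" "V m' \<in> Eg n a b m" using h unfolding Eg_def by (auto split: if_splits)
  then show "m = m'" unfolding Eg_def by (auto split: if_splits)
qed

lemma path_ok:
  assumes "1 \<le> j" "j \<le> k" "k \<le> n - a - b"
    and "sw \<Longrightarrow> j \<in> tI n a b \<and> j < k" "ew \<Longrightarrow> k - 1 \<in> tI n a b \<and> j < k"
    and "sw \<and> ew \<Longrightarrow> Suc j < k"
  shows "loose_path (tEdges n a b) (pv sw ew j k) (map (Eg n a b) [j..<k])"
proof -
  let ?f = "\<lambda>m. if sw \<and> m = j then W j else if ew \<and> m = k then W (k - 1) else V m"
  have inj: "inj_on ?f {j..<Suc k}"
    unfolding inj_on_def using assms by (auto split: if_splits)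
  have injE: "inj_on (Eg n a b) {j..<k}" unfolding inj_on_def using Eg_inj by blast
  have sub: "set (map (Eg n a b) [j..<k]) \<subseteq> tEdges n a b" using assms Eg_in by auto
  have cons: "pv sw ew j k ! i \<in> map (Eg n a b) [j..<k] ! i \<and> pv sw ew j k ! Suc i \<in> map (Eg n a b) [j..<k] ! i"
    if "i < length (map (Eg n a b) [j..<k])" for i
  proof -
    have i: "i < k - j" using that by simp
    have "pv sw ew j k ! i = ?f (j + i)" "pv sw ew j k ! Suc i = ?f (j + Suc i)"
      using i unfolding pv_def by (simp_all del: upt_Suc)
    moreover have "map (Eg n a b) [j..<k] ! i = Eg n a b (j + i)" using i by simp
    ultimately show ?thesis using assms i unfolding Eg_def by (auto split: if_splits)
  qed
  have disj: "map (Eg n a b) [j..<k] ! i \<inter> map (Eg n a b) [j..<k] ! i' = {}"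
    if "i < length (map (Eg n a b) [j..<k])" "i' < length (map (Eg n a b) [j..<k])" "Suc i < i'" for i i'
    using that unfolding Eg_def by (auto split: if_splits)
  have dv: "distinct (pv sw ew j k)" unfolding pv_def using inj by (simp add: distinct_map del: upt_Suc)
  have de: "distinct (map (Eg n a b) [j..<k])" using injE by (simp add: distinct_map)
  have len: "length (pv sw ew j k) = Suc (length (map (Eg n a b) [j..<k]))"
    unfolding pv_def using assms(2) by (simp del: upt_Suc)
  show ?thesis unfolding loose_path_def
    using dv de len sub cons disj by blast
qed

lemma pv_hd_last:
  assumes "j < k"
  shows "hd (pv sw ew j k) = (if sw then W j else V j)"
    "last (pv sw ew j k) = (if ew then W (k - 1) else V k)"
  using assms unfolding pv_def by (auto simp: hd_map last_map)

lemma pv_len: "j \<le> k \<Longrightarrow> length (map (Eg n a b) [j..<k]) = k - j" by simp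

lemma lp_single: "loose_path E [u] []" by (simp add: loose_path_def)

lemma exists_path:
  assumes ab: "a + b < n - a - b" and u: "u \<in> tVerts n a b" and v: "v \<in> tVerts n a b"
  shows "\<exists>vs es. loose_path (tEdges n a b) vs es \<and> length es = dd u v \<and> hd vs = u \<and> last vs = v"
proof -
  let ?l = "n - a - b"
  have tI: "i \<in> tI n a b \<Longrightarrow> 1 \<le> i \<and> i < ?l" for i using ab unfolding tI_def by auto
  have PV: "\<exists>vs es. loose_path (tEdges n a b) vs es \<and> length es = k - j \<and> hd vs = (if sw then W j else V j)
      \<and> last vs = (if ew then W (k - 1) else V k)"
    if "1 \<le> j" "j < k" "k \<le> ?l" "sw \<Longrightarrow> j \<in> tI n a b" "ew \<Longrightarrow> k - 1 \<in> tI n a b"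
      "sw \<and> ew \<Longrightarrow> Suc j < k" for sw ew j k
    using path_ok[of j k n a b sw ew] pv_hd_last[of j k sw ew] that by (intro exI[of _ "pv sw ew j k"] exI[of _ "map (Eg n a b) [j..<k]"]) auto
  have PVr: "\<exists>vs es. loose_path (tEdges n a b) vs es \<and> length es = k - j \<and> last vs = (if sw then W j else V j)
      \<and> hd vs = (if ew then W (k - 1) else V k)"
    if P: "1 \<le> j" "j < k" "k \<le> ?l" "sw \<Longrightarrow> j \<in> tI n a b" "ew \<Longrightarrow> k - 1 \<in> tI n a b"
      "sw \<and> ew \<Longrightarrow> Suc j < k" for sw ew j k
  proof -
    obtain vs es where "loose_path (tEdges n a b) vs es" "length es = k - j" "hd vs = (if sw then W j else V j)"
      "last vs = (if ew then W (k - 1) else V k)" using PV[of j k sw ew, OF P] by blast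
    moreover have "vs \<noteq> []" using calculation(1) unfolding loose_path_def by auto
    ultimately show ?thesis using loose_path_rev
      by (intro exI[of _ "rev vs"] exI[of _ "rev es"]) (auto simp: hd_rev last_rev)
  qed
  show ?thesis
  proof (cases u)
    case (V j)
    then have j: "1 \<le> j" "j \<le> ?l" using u unfolding tVerts_def by auto
    show ?thesis
    proof (cases v)
      case (V k)
      then have k: "1 \<le> k" "k \<le> ?l" using v unfolding tVerts_def by auto
      consider "j < k" | "j = k" | "k < j" by arith
      then show ?thesis
      proof cases
        case 1 then show ?thesis using PV[of j k False False] j k \<open>u = V j\<close> \<open>v = V k\<close> by auto
      next
        case 2 then show ?thesis using lp_single \<open>u = V j\<close> \<open>v = V k\<close> by fastforce
      next
        case 3 then show ?thesis using PVr[of k j False False] j k \<open>u = V j\<close> \<open>v = V k\<close> by auto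
      qed
    next
      case (W i)
      then have i: "i \<in> tI n a b" using v unfolding tVerts_def by auto
      show ?thesis
      proof (cases "i < j")
        case True then show ?thesis using PVr[of i j True False] j i tI[OF i] \<open>u = V j\<close> \<open>v = W i\<close> by auto
      next
        case False then show ?thesis using PV[of j "Suc i" False True] j i tI[OF i] \<open>u = V j\<close> \<open>v = W i\<close> by auto
      qed
    qed
  next
    case (W i)
    then have i: "i \<in> tI n a b" using u unfolding tVerts_def by auto
    show ?thesis
    proof (cases v)
      case (V j)
      then have j: "1 \<le> j" "j \<le> ?l" using v unfolding tVerts_def by auto
      show ?thesis
      proof (cases "i < j")
        case True then show ?thesis using PV[of i j True False] j i tI[OF i] \<open>u = W i\<close> \<open>v = V j\<close> by auto
      next
        case False then show ?thesis using PVr[of j "Suc i" False True] j i tI[OF i] \<open>u = W i\<close> \<open>v = V j\<close> by auto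
      qed
    next
      case (W k)
      then have k: "k \<in> tI n a b" using v unfolding tVerts_def by auto
      consider "i < k" | "i = k" | "k < i" by arith
      then show ?thesis
      proof cases
        case 1 then show ?thesis using PV[of i "Suc k" True True] k i tI[OF i] tI[OF k] \<open>u = W i\<close> \<open>v = W k\<close> by (auto simp: Suc_diff_le)
      next
        case 2 then show ?thesis using lp_single \<open>u = W i\<close> \<open>v = W k\<close> by fastforce
      next
        case 3 then show ?thesis using PVr[of k "Suc i" True True] k i tI[OF i] tI[OF k] \<open>u = W i\<close> \<open>v = W k\<close> by (auto simp: Suc_diff_le)
      qed
    qed
  qed
qed

lemma hdist_dd:
  assumes ab: "a + b < n - a - b" and u: "u \<in> tVerts n a b" and v: "v \<in> tVerts n a b"
  shows "hdist (tEdges n a b) u v = dd u v"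
  unfolding hdist_def
proof (rule Least_equality)
  show "\<exists>vs es. loose_path (tEdges n a b) vs es \<and> length es = dd u v \<and> hd vs = u \<and> last vs = v"
    using exists_path[OF assms] .
next
  fix p assume "\<exists>vs es. loose_path (tEdges n a b) vs es \<and> length es = p \<and> hd vs = u \<and> last vs = v"
  then obtain vs es where "loose_path (tEdges n a b) vs es" "length es = p" "hd vs = u" "last vs = v" by blast
  then show "dd u v \<le> p" using lower by blast
qed

lemma ddVV: "real (dd (V j) (V k)) = \<bar>real j - real k\<bar>" by (auto simp: of_nat_diff)
lemma ddVW: "real (dd (V j) (W i)) = (if i < j then real j - real i else real i + 1 - real j)"
  by (auto simp: of_nat_diff)
lemma ddWV: "real (dd (W i) (V j)) = (if i < j then real j - real i else real i + 1 - real j)"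
  by (auto simp: of_nat_diff)
lemma ddWW: "real (dd (W i) (W k)) = (if i = k then 0 else \<bar>real i - real k\<bar> + 1)"
  by (auto simp: of_nat_diff)

declare dd.simps[simp del]

locale hyp =
  fixes n a b l :: nat and x :: "vtx \<Rightarrow> real" and \<rho> :: real
  assumes hb: "a + 2 \<le> b" and hlb: "2 * b < l" and l_def: "l = n - a - b"
    and xpos: "\<And>v. v \<in> tVerts n a b \<Longrightarrow> 0 < x v"
    and eig: "\<And>v. v \<in> tVerts n a b \<Longrightarrow>
        (\<Sum>u\<in>tVerts n a b. dist_matrix (tEdges n a b) v u * x u) = \<rho> * x v"
begin

definition "y k = x (V k)"
definition "z i = x (W i)"
definition "zI i = (if i \<in> tI n a b then z i else 0)"
definition "S = (\<Sum>k\<in>{1..l}. y k) + (\<Sum>i\<in>{1..<l}. zI i)"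

lemma memI: "i \<in> tI n a b \<longleftrightarrow> (1 \<le> i \<and> i \<le> a) \<or> (l - b \<le> i \<and> i \<le> l - 1)"
  unfolding tI_def l_def by auto

lemma tV: "tVerts n a b = V ` {1..l} \<union> W ` tI n a b"
  unfolding tVerts_def l_def ..

lemma I_sub: "tI n a b \<subseteq> {1..<l}" using hlb hb by (auto simp: memI)

lemma ypos: "1 \<le> k \<Longrightarrow> k \<le> l \<Longrightarrow> 0 < y k"
  using xpos[of "V k"] unfolding y_def tV by auto

lemma zpos: "i \<in> tI n a b \<Longrightarrow> 0 < z i"
  using xpos[of "W i"] unfolding z_def tV by auto

lemma zI_nonneg: "0 \<le> zI i" using zpos unfolding zI_def by (auto intro: less_imp_le)

lemma zI_pos: "i \<in> tI n a b \<Longrightarrow> 0 < zI i" using zpos unfolding zI_def by auto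

lemma sumI: "(\<Sum>i\<in>tI n a b. c i * z i) = (\<Sum>i\<in>{1..<l}. c i * zI i)"
proof -
  have "(\<Sum>i\<in>{1..<l}. c i * zI i) = (\<Sum>i\<in>{1..<l}. if i \<in> tI n a b then c i * z i else 0)"
    unfolding zI_def by (rule sum.cong) auto
  also have "\<dots> = (\<Sum>i\<in>{1..<l} \<inter> tI n a b. c i * z i)"
    by (simp add: sum.inter_restrict)
  also have "{1..<l} \<inter> tI n a b = tI n a b" using I_sub by auto
  finally show ?thesis by simp
qed

lemma ab_l: "a + b < n - a - b" using hb hlb l_def by simp

lemma eq_gen:
  assumes v: "v \<in> tVerts n a b"
  shows "(\<Sum>k\<in>{1..l}. real (dd v (V k)) * y k) + (\<Sum>i\<in>{1..<l}. real (dd v (W i)) * zI i) = \<rho> * x v"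
proof -
  have fin: "finite (V ` {1..l})" "finite (W ` tI n a b)" by (auto simp: tI_def)
  have dis: "V ` {1..l} \<inter> W ` tI n a b = {}" by auto
  have "\<rho> * x v = (\<Sum>u\<in>tVerts n a b. dist_matrix (tEdges n a b) v u * x u)" using eig[OF v] by simp
  also have "\<dots> = (\<Sum>u\<in>tVerts n a b. real (dd v u) * x u)"
    by (rule sum.cong) (auto simp: dist_matrix_def hdist_dd[OF ab_l v])
  also have "\<dots> = (\<Sum>u\<in>V ` {1..l}. real (dd v u) * x u) + (\<Sum>u\<in>W ` tI n a b. real (dd v u) * x u)"
    unfolding tV by (rule sum.union_disjoint[OF fin dis])
  also have "(\<Sum>u\<in>V ` {1..l}. real (dd v u) * x u) = (\<Sum>k\<in>{1..l}. real (dd v (V k)) * y k)"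
    by (subst sum.reindex) (auto simp: inj_on_def y_def)
  also have "(\<Sum>u\<in>W ` tI n a b. real (dd v u) * x u) = (\<Sum>i\<in>tI n a b. real (dd v (W i)) * z i)"
    by (subst sum.reindex) (auto simp: inj_on_def z_def)
  also have "\<dots> = (\<Sum>i\<in>{1..<l}. real (dd v (W i)) * zI i)" by (rule sumI)
  finally show ?thesis by simp
qed

lemma EqV:
  assumes "1 \<le> j" "j \<le> l"
  shows "(\<Sum>k\<in>{1..l}. real (dd (V j) (V k)) * y k) + (\<Sum>i\<in>{1..<l}. real (dd (V j) (W i)) * zI i) = \<rho> * y j"
  using eq_gen[of "V j"] assms unfolding tV y_def by auto

lemma EqW:
  assumes "i \<in> tI n a b"
  shows "(\<Sum>k\<in>{1..l}. real (dd (W i) (V k)) * y k) + (\<Sum>i'\<in>{1..<l}. real (dd (W i) (W i')) * zI i') = \<rho> * z i"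
  using eq_gen[of "W i"] assms unfolding tV z_def by auto

definition "AV j = (\<Sum>k\<in>{1..l}. real (dd (V j) (V k)) * y k)"
definition "BV j = (\<Sum>i\<in>{1..<l}. real (dd (V j) (W i)) * zI i)"

lemma EqV': "1 \<le> j \<Longrightarrow> j \<le> l \<Longrightarrow> AV j + BV j = \<rho> * y j"
  using EqV unfolding AV_def BV_def by simp

lemma sum_delta_mult:
  fixes f :: "nat \<Rightarrow> real"
  shows "finite A \<Longrightarrow> (\<Sum>k\<in>A. (if k = j then c else 0) * f k) = (if j \<in> A then c * f j else 0)"
proof -
  assume "finite A"
  have "(\<Sum>k\<in>A. (if k = j then c else 0) * f k) = (\<Sum>k\<in>A. if k = j then c * f k else 0)"
    by (rule sum.cong) auto
  then show ?thesis using \<open>finite A\<close> by (simp add: sum.delta)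
qed

lemma row:
  assumes "2 \<le> j" "j + 1 \<le> l"
  shows "\<rho> * (y (j + 1) - 2 * y j + y (j - 1)) = 2 * y j + zI (j - 1) + zI j"
proof -
  have e: "AV (j+1) + BV (j+1) = \<rho> * y (j+1)" "AV j + BV j = \<rho> * y j" "AV (j-1) + BV (j-1) = \<rho> * y (j-1)"
    using EqV' assms by auto
  have cV: "real (dd (V (j+1)) (V k)) - 2 * real (dd (V j) (V k)) + real (dd (V (j-1)) (V k)) = (if k = j then 2 else 0)" for k
    using assms by (auto simp: ddVV of_nat_diff abs_if)
  have cW: "real (dd (V (j+1)) (W i)) - 2 * real (dd (V j) (W i)) + real (dd (V (j-1)) (W i))
      = (if i = j - 1 then 1 else 0) + (if i = j then 1 else 0)" for i
    using assms by (auto simp: ddVW of_nat_diff)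
  have "AV (j+1) - 2 * AV j + AV (j-1) = (\<Sum>k\<in>{1..l}. (real (dd (V (j+1)) (V k)) - 2 * real (dd (V j) (V k)) + real (dd (V (j-1)) (V k))) * y k)"
    unfolding AV_def by (simp add: left_diff_distrib distrib_right sum.distrib sum_subtractf sum_distrib_left mult.assoc)
  also have "\<dots> = (\<Sum>k\<in>{1..l}. (if k = j then 2 else 0) * y k)" by (intro sum.cong refl) (subst cV, rule refl)
  also have "\<dots> = 2 * y j" using assms by (simp add: sum_delta_mult)
  finally have A: "AV (j+1) - 2 * AV j + AV (j-1) = 2 * y j" .
  have "BV (j+1) - 2 * BV j + BV (j-1) = (\<Sum>i\<in>{1..<l}. (real (dd (V (j+1)) (W i)) - 2 * real (dd (V j) (W i)) + real (dd (V (j-1)) (W i))) * zI i)"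
    unfolding BV_def by (simp add: left_diff_distrib distrib_right sum.distrib sum_subtractf sum_distrib_left mult.assoc)
  also have "\<dots> = (\<Sum>i\<in>{1..<l}. (if i = j - 1 then 1 else 0) * zI i + (if i = j then 1 else 0) * zI i)"
    by (intro sum.cong refl) (subst cW, simp add: distrib_right)
  also have "\<dots> = zI (j - 1) + zI j"
  proof -
    have "1 \<le> j - 1" "j - 1 < l" "j < l" using assms by auto
    then show ?thesis using assms by (simp add: sum.distrib sum_delta_mult)
  qed
  finally have B: "BV (j+1) - 2 * BV j + BV (j-1) = zI (j - 1) + zI j" .
  show ?thesis using A B e by (simp add: algebra_simps)
qed

lemma pend:
  assumes i: "i \<in> tI n a b"
  shows "(2 * \<rho> + 3) * z i = \<rho> * (y i + y (i + 1)) + S"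
proof -
  have il: "1 \<le> i" "i + 1 \<le> l" using i I_sub by auto
  have e: "AV i + BV i = \<rho> * y i" "AV (i+1) + BV (i+1) = \<rho> * y (i+1)" using EqV' il by auto
  have w: "(\<Sum>k\<in>{1..l}. real (dd (W i) (V k)) * y k) + (\<Sum>i'\<in>{1..<l}. real (dd (W i) (W i')) * zI i') = \<rho> * z i"
    using EqW[OF i] .
  have cV: "2 * real (dd (W i) (V k)) = real (dd (V i) (V k)) + real (dd (V (i+1)) (V k)) + 1" for k
    by (auto simp: ddVV ddWV)
  have cW: "2 * real (dd (W i) (W i')) = real (dd (V i) (W i')) + real (dd (V (i+1)) (W i')) + 1 - (if i' = i then 3 else 0)" for i'
    by (auto simp: ddVW ddWW)
  have "2 * (\<Sum>k\<in>{1..l}. real (dd (W i) (V k)) * y k) = (\<Sum>k\<in>{1..l}. (2 * real (dd (W i) (V k))) * y k)"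
    by (simp add: sum_distrib_left mult.assoc)
  also have "\<dots> = (\<Sum>k\<in>{1..l}. real (dd (V i) (V k)) * y k + real (dd (V (i+1)) (V k)) * y k + y k)"
    by (intro sum.cong refl) (subst cV, simp add: distrib_right)
  also have "\<dots> = AV i + AV (i+1) + (\<Sum>k\<in>{1..l}. y k)" unfolding AV_def by (simp add: sum.distrib)
  finally have A: "2 * (\<Sum>k\<in>{1..l}. real (dd (W i) (V k)) * y k) = AV i + AV (i+1) + (\<Sum>k\<in>{1..l}. y k)" .
  have "2 * (\<Sum>i'\<in>{1..<l}. real (dd (W i) (W i')) * zI i') = (\<Sum>i'\<in>{1..<l}. (2 * real (dd (W i) (W i'))) * zI i')"
    by (simp add: sum_distrib_left mult.assoc)
  also have "\<dots> = (\<Sum>i'\<in>{1..<l}. real (dd (V i) (W i')) * zI i' + real (dd (V (i+1)) (W i')) * zI i' + zI i' - (if i' = i then 3 else 0) * zI i')"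
    by (intro sum.cong refl) (subst cW, simp add: algebra_simps)
  also have "\<dots> = BV i + BV (i+1) + (\<Sum>i'\<in>{1..<l}. zI i') - 3 * zI i"
    unfolding BV_def using il by (simp add: sum.distrib sum_subtractf sum_delta_mult)
  finally have B: "2 * (\<Sum>i'\<in>{1..<l}. real (dd (W i) (W i')) * zI i') = BV i + BV (i+1) + (\<Sum>i'\<in>{1..<l}. zI i') - 3 * zI i" .
  have "zI i = z i" using i unfolding zI_def by simp
  then show ?thesis using A B e w unfolding S_def by (simp add: algebra_simps)
qed

definition "Tl c = (\<Sum>k\<in>{1..l}. if c \<le> k then y k else 0) + (\<Sum>i\<in>{1..<l}. if c - 1 \<le> i then zI i else 0)"

lemma robin:
  assumes "4 \<le> c" "c \<le> l + 1"
  shows "\<rho> * ((y 2 - y 1) + (y (c - 1) - y (c - 2))) = 2 * (y 1 - y (c - 1)) + zI 1 - zI (c - 2) - 2 * Tl c"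
proof -
  have e: "AV 2 + BV 2 = \<rho> * y 2" "AV 1 + BV 1 = \<rho> * y 1" "AV (c-1) + BV (c-1) = \<rho> * y (c-1)"
     "AV (c-2) + BV (c-2) = \<rho> * y (c-2)"
    using EqV' assms by auto
  have cV: "1 \<le> k \<Longrightarrow> real (dd (V 2) (V k)) - real (dd (V 1) (V k)) + real (dd (V (c-1)) (V k)) - real (dd (V (c-2)) (V k))
     = (if k = 1 then 2 else 0) - (if k = c - 1 then 2 else 0) - 2 * (if c \<le> k then 1 else 0)" for k
    using assms by (auto simp: ddVV of_nat_diff abs_if)
  have cW: "1 \<le> i \<Longrightarrow> real (dd (V 2) (W i)) - real (dd (V 1) (W i)) + real (dd (V (c-1)) (W i)) - real (dd (V (c-2)) (W i))
     = (if i = 1 then 1 else 0) - (if i = c - 2 then 1 else 0) - 2 * (if c - 1 \<le> i then 1 else 0)" for i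
    using assms by (auto simp: ddVW of_nat_diff)
  have "AV 2 - AV 1 + AV (c-1) - AV (c-2) = (\<Sum>k\<in>{1..l}. (real (dd (V 2) (V k)) - real (dd (V 1) (V k)) + real (dd (V (c-1)) (V k)) - real (dd (V (c-2)) (V k))) * y k)"
    unfolding AV_def by (simp add: left_diff_distrib distrib_right sum.distrib sum_subtractf)
  also have "\<dots> = (\<Sum>k\<in>{1..l}. (if k = 1 then 2 else 0) * y k - (if k = c - 1 then 2 else 0) * y k - 2 * (if c \<le> k then y k else 0))"
    by (intro sum.cong refl) (subst cV; auto simp: left_diff_distrib)
  also have "\<dots> = 2 * y 1 - 2 * y (c - 1) - 2 * (\<Sum>k\<in>{1..l}. if c \<le> k then y k else 0)"
  proof -
    have "1 \<le> c - 1" "c - 1 \<le> l" "1 \<le> l" using assms by auto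
    then show ?thesis using assms by (simp add: sum_subtractf sum_delta_mult sum_distrib_left)
  qed
  finally have A: "AV 2 - AV 1 + AV (c-1) - AV (c-2) = 2 * y 1 - 2 * y (c - 1) - 2 * (\<Sum>k\<in>{1..l}. if c \<le> k then y k else 0)" .
  have "BV 2 - BV 1 + BV (c-1) - BV (c-2) = (\<Sum>i\<in>{1..<l}. (real (dd (V 2) (W i)) - real (dd (V 1) (W i)) + real (dd (V (c-1)) (W i)) - real (dd (V (c-2)) (W i))) * zI i)"
    unfolding BV_def by (simp add: left_diff_distrib distrib_right sum.distrib sum_subtractf)
  also have "\<dots> = (\<Sum>i\<in>{1..<l}. (if i = 1 then 1 else 0) * zI i - (if i = c - 2 then 1 else 0) * zI i - 2 * (if c - 1 \<le> i then zI i else 0))"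
    by (intro sum.cong refl) (subst cW; auto simp: left_diff_distrib)
  also have "\<dots> = zI 1 - zI (c - 2) - 2 * (\<Sum>i\<in>{1..<l}. if c - 1 \<le> i then zI i else 0)"
  proof -
    have "1 \<le> c - 2" "c - 2 < l" "1 < l" using assms by auto
    then show ?thesis using assms by (simp add: sum_subtractf sum_delta_mult sum_distrib_left)
  qed
  finally have B: "BV 2 - BV 1 + BV (c-1) - BV (c-2) = zI 1 - zI (c - 2) - 2 * (\<Sum>i\<in>{1..<l}. if c - 1 \<le> i then zI i else 0)" .
  show ?thesis using A B e unfolding Tl_def by (simp add: algebra_simps)
qed

lemma direct:
  assumes "1 \<le> s" "s \<le> l" "1 \<le> t" "t \<le> l"
  shows "\<rho> * (y t - y s) = (\<Sum>k\<in>{1..l}. (real (dd (V t) (V k)) - real (dd (V s) (V k))) * y k)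
      + (\<Sum>i\<in>{1..<l}. (real (dd (V t) (W i)) - real (dd (V s) (W i))) * zI i)"
proof -
  have e: "AV t + BV t = \<rho> * y t" "AV s + BV s = \<rho> * y s" using EqV' assms by auto
  then show ?thesis unfolding AV_def BV_def by (simp add: left_diff_distrib sum_subtractf algebra_simps)
qed

end

lemma step_core:
  fixes g0 g1 g2 k0 k1 r e :: real
  assumes "0 \<le> k0" "0 \<le> k1" "k1 < r"
    and row: "r * (g2 - 2 * g1 + g0) \<le> 2 * g1 + k0 * (g0 + g1) + k1 * (g1 + g2) - e"
    and "g1 \<le> g0" "g1 \<le> 0" "g0 + g1 \<le> 0" "0 \<le> e"
  shows "g2 \<le> g1" "0 < e \<or> g1 < 0 \<Longrightarrow> g2 < g1"
proof -
  have p1: "k0 * (g0 + g1) \<le> 0" using assms by (simp add: mult_nonneg_nonpos)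
  have p2: "k1 * g1 \<le> 0" using assms by (simp add: mult_nonneg_nonpos)
  have key: "(r - k1) * (g2 - g1) \<le> r * (g1 - g0) + 2 * g1 + k0 * (g0 + g1) + 2 * (k1 * g1) - e"
    using row by (simp add: algebra_simps)
  have r1: "r * (g1 - g0) \<le> 0" using assms by (simp add: mult_nonneg_nonpos)
  have rk: "0 < r - k1" using assms by simp
  show "g2 \<le> g1"
  proof (rule ccontr)
    assume "\<not> g2 \<le> g1"
    then have "0 < (r - k1) * (g2 - g1)" using rk by simp
    then show False using key p1 p2 r1 assms by linarith
  qed
  assume h: "0 < e \<or> g1 < 0"
  show "g2 < g1"
  proof (rule ccontr)
    assume "\<not> g2 < g1"
    then have "0 \<le> (r - k1) * (g2 - g1)" using rk by simp
    then show False using key p1 p2 r1 assms h by linarith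
  qed
qed

lemma shoot:
  fixes g k :: "nat \<Rightarrow> real" and r :: real and N :: nat
  assumes k0: "\<And>i. 0 \<le> k i" and kr: "\<And>i. k i < r"
    and row: "\<And>j. 1 \<le> j \<Longrightarrow> j \<le> N \<Longrightarrow>
       r * (g (j+1) - 2 * g j + g (j-1)) \<le> 2 * g j + k (j-1) * (g (j-1) + g j) + k j * (g j + g (j+1))"
    and s: "g 1 \<le> 0" "g 1 \<le> g 0" "g 0 + g 1 \<le> 0"
  shows "m \<le> N \<Longrightarrow> g (m+1) \<le> g m \<and> g (m+1) \<le> 0 \<and> g m + g (m+1) \<le> 0"
proof (induction m)
  case 0 then show ?case using s by simp
next
  case (Suc m)
  then have IH: "g (m+1) \<le> g m" "g (m+1) \<le> 0" "g m + g (m+1) \<le> 0" by auto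
  have r: "r * (g (m+2) - 2 * g (m+1) + g m) \<le> 2 * g (m+1) + k m * (g m + g (m+1)) + k (m+1) * (g (m+1) + g (m+2)) - 0"
    using row[of "m+1"] Suc.prems by (simp add: numeral_2_eq_2)
  have "g (m+2) \<le> g (m+1)"
    using step_core(1)[OF k0 k0 kr r IH] by simp
  then show ?case using IH by (simp add: numeral_2_eq_2)
qed

lemma dec_chain0:
  fixes g :: "nat \<Rightarrow> real"
  assumes "\<And>j. i \<le> j \<Longrightarrow> j < M \<Longrightarrow> g (j+1) \<le> g j" "i \<le> m" "m \<le> M"
  shows "g m \<le> g i"
  using assms(2,3)
proof (induction m rule: dec_induct)
  case base then show ?case by simp
next
  case (step m) then show ?case using assms(1)[of m] by simp
qed

lemma shoot_strict:
  fixes g k :: "nat \<Rightarrow> real" and r :: real and N :: nat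
  assumes k0: "\<And>i. 0 \<le> k i" and kr: "\<And>i. k i < r"
    and row: "\<And>j. 1 \<le> j \<Longrightarrow> j \<le> N \<Longrightarrow>
       r * (g (j+1) - 2 * g j + g (j-1)) \<le> 2 * g j + k (j-1) * (g (j-1) + g j) + k j * (g j + g (j+1))"
    and s: "g 1 \<le> 0" "g 1 \<le> g 0" "g 0 + g 1 \<le> 0"
    and j: "1 \<le> j" "j \<le> N"
    and str: "r * (g (j+1) - 2 * g j + g (j-1)) < 2 * g j + k (j-1) * (g (j-1) + g j) + k j * (g j + g (j+1)) \<or> g 1 < 0"
  shows "g (j+1) < g j"
proof -
  obtain m where m: "j = m + 1" using j by (cases j) auto
  have IH: "g (m+1) \<le> g m" "g (m+1) \<le> 0" "g m + g (m+1) \<le> 0"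
    using shoot[OF k0 kr row s, of m] j m by auto
  have stp: "g (i+1) \<le> g i" if "1 \<le> i" "i < j" for i
    using shoot[OF k0 kr row s, of i] that j by auto
  have mono: "g i \<le> g 1" if "1 \<le> i" "i \<le> j" for i
    using dec_chain0[of 1 j g i] stp that by blast
  show ?thesis
  proof (cases "g 1 < 0")
    case True
    have "g j < 0" using mono[of j] j True by simp
    have r: "r * (g (m+2) - 2 * g (m+1) + g m) \<le> 2 * g (m+1) + k m * (g m + g (m+1)) + k (m+1) * (g (m+1) + g (m+2)) - 0"
      using row[of "m+1"] j m by (simp add: numeral_2_eq_2)
    show ?thesis using step_core(2)[OF k0 k0 kr r IH] \<open>g j < 0\<close> m by (simp add: numeral_2_eq_2)
  next
    case False
    with str have st: "r * (g (j+1) - 2 * g j + g (j-1)) < 2 * g j + k (j-1) * (g (j-1) + g j) + k j * (g j + g (j+1))" by simp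
    define e where "e = 2 * g j + k (j-1) * (g (j-1) + g j) + k j * (g j + g (j+1)) - r * (g (j+1) - 2 * g j + g (j-1))"
    have e: "0 < e" using st unfolding e_def by simp
    have r: "r * (g (m+2) - 2 * g (m+1) + g m) \<le> 2 * g (m+1) + k m * (g m + g (m+1)) + k (m+1) * (g (m+1) + g (m+2)) - e"
      unfolding e_def m by (simp add: numeral_2_eq_2)
    show ?thesis using step_core(2)[OF k0 k0 kr r IH] e m by (simp add: numeral_2_eq_2)
  qed
qed

lemma dec_chain:
  fixes g :: "nat \<Rightarrow> real"
  assumes "\<And>j. i \<le> j \<Longrightarrow> j < M \<Longrightarrow> g (j+1) \<le> g j" "i \<le> m" "m \<le> M"
  shows "g m \<le> g i"
  using assms(2,3)
proof (induction m rule: dec_induct)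
  case base then show ?case by simp
next
  case (step m) then show ?case using assms(1)[of m] by simp
qed

lemma dec_chain_strict:
  fixes g :: "nat \<Rightarrow> real"
  assumes "\<And>j. i \<le> j \<Longrightarrow> j < M \<Longrightarrow> g (j+1) < g j" "i < m" "m \<le> M"
  shows "g m < g i"
proof -
  have "\<And>j. i + 1 \<le> j \<Longrightarrow> j < M \<Longrightarrow> g (j+1) \<le> g j" using assms(1) by (simp add: less_imp_le)
  then have "g m \<le> g (i+1)" using dec_chain[of "i+1" M g m] assms by simp
  moreover have "g (i+1) < g i" using assms by simp
  ultimately show ?thesis by simp
qed

context hyp
begin

lemma l_ge: "2 * b + 1 \<le> l" "a + 2 \<le> b" using hlb hb by auto

lemma rho_pos: "0 < \<rho>"
proof -
  have e: "AV 1 + BV 1 = \<rho> * y 1" using EqV'[of 1] l_ge by auto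
  have ynn: "0 \<le> y k" if "k \<in> {1..l}" for k using ypos[of k] that by auto
  have "real (dd (V 1) (V 2)) * y 2 \<le> AV 1" unfolding AV_def
    by (rule member_le_sum) (use l_ge ynn in \<open>auto intro!: mult_nonneg_nonneg\<close>)
  moreover have "real (dd (V 1) (V 2)) = 1" by (simp add: ddVV)
  moreover have "0 < y 2" using ypos l_ge by auto
  moreover have "0 \<le> BV 1" unfolding BV_def by (rule sum_nonneg) (simp add: zI_nonneg)
  ultimately have "0 < \<rho> * y 1" using e by simp
  moreover have "0 < y 1" using ypos l_ge by auto
  ultimately show ?thesis by (simp add: zero_less_mult_iff)
qed

definition "kp = \<rho> / (2 * \<rho> + 3)"

lemma kp_pos: "0 < kp" and kp_lt: "kp < \<rho>"
proof -
  have r: "0 < \<rho>" by (rule rho_pos)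
  show "0 < kp" unfolding kp_def using r by simp
  have "0 < \<rho> * (2 * \<rho> + 2)" using r by simp
  moreover have "\<rho> * (2 * \<rho> + 3) - \<rho> = \<rho> * (2 * \<rho> + 2)" by (simp add: algebra_simps)
  ultimately have "\<rho> < \<rho> * (2 * \<rho> + 3)" by linarith
  then show "kp < \<rho>" unfolding kp_def using r by (simp add: divide_less_eq)
qed

lemma rowR:
  assumes "2 \<le> j" "j + 1 \<le> l" "j + 2 \<le> c" "c + 1 \<le> l + j"
  shows "\<rho> * ((y (j+1) - y (c - (j+1))) - 2 * (y j - y (c - j)) + (y (j-1) - y (c - (j-1))))
    = 2 * (y j - y (c - j)) + (zI (j-1) - zI (c - j)) + (zI j - zI (c - (j+1)))"
proof -
  have r1: "\<rho> * (y (j + 1) - 2 * y j + y (j - 1)) = 2 * y j + zI (j - 1) + zI j" using row assms by auto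
  have r2: "\<rho> * (y (c - j + 1) - 2 * y (c - j) + y (c - j - 1)) = 2 * y (c - j) + zI (c - j - 1) + zI (c - j)"
    using row[of "c - j"] assms by auto
  have e: "c - j + 1 = c - (j - 1)" "c - j - 1 = c - (j + 1)" using assms by auto
  show ?thesis using r1 r2 unfolding e by (simp add: algebra_simps)
qed

lemma pdiff:
  assumes "i \<in> tI n a b" "c - 1 - i \<in> tI n a b" "i + 2 \<le> c"
  shows "z i - z (c - 1 - i) = kp * ((y i - y (c - i)) + (y (i+1) - y (c - 1 - i)))"
proof -
  have p1: "(2 * \<rho> + 3) * z i = \<rho> * (y i + y (i + 1)) + S" using pend assms by auto
  have e1: "c - 1 - i + 1 = c - i" using assms by auto
  have p2: "(2 * \<rho> + 3) * z (c - 1 - i) = \<rho> * (y (c - 1 - i) + y (c - i)) + S"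
    using pend[OF assms(2), unfolded e1] .
  have pos: "0 < 2 * \<rho> + 3" using rho_pos by simp
  have "(2 * \<rho> + 3) * (z i - z (c - 1 - i)) = (2 * \<rho> + 3) * z i - (2 * \<rho> + 3) * z (c - 1 - i)"
    by (rule right_diff_distrib)
  also have "\<dots> = \<rho> * (y i + y (i + 1)) - \<rho> * (y (c - 1 - i) + y (c - i))" using p1 p2 by simp
  also have "\<dots> = \<rho> * ((y i - y (c - i)) + (y (i+1) - y (c - 1 - i)))" by (simp add: algebra_simps)
  finally have "(2 * \<rho> + 3) * (z i - z (c - 1 - i)) = \<rho> * ((y i - y (c - i)) + (y (i+1) - y (c - 1 - i)))" .
  then show ?thesis unfolding kp_def using pos by (simp add: field_simps)
qed

end

context hyp
begin

lemma kp_half: "2 * kp < 1"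
proof -
  have pos: "0 < 2 * \<rho> + 3" using rho_pos by simp
  have "2 * kp = 2 * \<rho> / (2 * \<rho> + 3)" unfolding kp_def by simp
  also have "\<dots> < 1" using pos by (simp add: divide_less_eq)
  finally show ?thesis .
qed

definition "u k = y k - y (l + 1 - k)"
definition "kA i = (if 1 \<le> i \<and> i \<le> a then kp else 0)"
definition "pdA i = zI i - zI (l - i)"

lemma kA_nonneg: "0 \<le> kA i" and kA_lt: "kA i < \<rho>"
  unfolding kA_def using kp_pos kp_lt rho_pos by auto

lemma pdA_eq: "1 \<le> i \<Longrightarrow> i \<le> a \<Longrightarrow> pdA i = kp * (u i + u (i+1))"
proof -
  assume i: "1 \<le> i" "i \<le> a"
  have I1: "i \<in> tI n a b" using i by (simp add: memI)
  have I2: "l + 1 - 1 - i \<in> tI n a b" using i l_ge unfolding memI by arith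
  have "z i - z (l + 1 - 1 - i) = kp * ((y i - y (l + 1 - i)) + (y (i+1) - y (l + 1 - 1 - i)))"
    by (rule pdiff[OF I1 I2]) (use i l_ge in auto)
  moreover have "l + 1 - 1 - i = l - i" "l + 1 - (i + 1) = l - i" by auto
  ultimately show ?thesis using I1 I2 unfolding pdA_def u_def zI_def by simp
qed

lemma pdA_neg: "a + 1 \<le> i \<Longrightarrow> i \<le> b \<Longrightarrow> pdA i < 0"
proof -
  assume i: "a + 1 \<le> i" "i \<le> b"
  have "i \<notin> tI n a b" using i l_ge unfolding memI by arith
  moreover have "l - i \<in> tI n a b" using i l_ge unfolding memI by arith
  ultimately show ?thesis unfolding pdA_def using zI_pos[of "l - i"] unfolding zI_def by simp
qed

lemma pdA_zero: "b < i \<Longrightarrow> 2 * i \<le> l \<Longrightarrow> pdA i = 0"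
proof -
  assume i: "b < i" "2 * i \<le> l"
  have "i \<notin> tI n a b" using i l_ge unfolding memI by arith
  moreover have "l - i \<notin> tI n a b" using i l_ge unfolding memI by arith
  ultimately show ?thesis unfolding pdA_def zI_def by simp
qed

lemma pdA_le: "1 \<le> i \<Longrightarrow> 2 * i \<le> l \<Longrightarrow> pdA i \<le> kA i * (u i + u (i+1))"
proof -
  assume i: "1 \<le> i" "2 * i \<le> l"
  consider "i \<le> a" | "a + 1 \<le> i \<and> i \<le> b" | "b < i" by arith
  then show ?thesis
  proof cases
    case 1 then show ?thesis using pdA_eq i unfolding kA_def by simp
  next
    case 2 then show ?thesis using pdA_neg unfolding kA_def by fastforce
  next
    case 3 then show ?thesis using pdA_zero i l_ge unfolding kA_def by simp
  qed
qed

lemma rowA: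
  assumes "2 \<le> j" "2 * j \<le> l"
  shows "\<rho> * (u (j+1) - 2 * u j + u (j-1)) = 2 * u j + pdA (j-1) + pdA j"
proof -
  have r: "\<rho> * ((y (j+1) - y (l + 1 - (j+1))) - 2 * (y j - y (l + 1 - j)) + (y (j-1) - y (l + 1 - (j-1))))
    = 2 * (y j - y (l + 1 - j)) + (zI (j-1) - zI (l + 1 - j)) + (zI j - zI (l + 1 - (j+1)))"
    by (rule rowR) (use assms in auto)
  have e: "l - (j - 1) = l + 1 - j" "l + 1 - (j+1) = l - j" using assms by auto
  show ?thesis using r unfolding u_def pdA_def e by simp
qed

lemma Tl_empty: "Tl (l + 1) = 0" unfolding Tl_def by simp

lemma robinA: "\<rho> * (u 2 - u 1) = 2 * u 1 + pdA 1"
proof -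
  have r: "\<rho> * ((y 2 - y 1) + (y (l + 1 - 1) - y (l + 1 - 2))) = 2 * (y 1 - y (l + 1 - 1)) + zI 1 - zI (l + 1 - 2) - 2 * Tl (l + 1)"
    by (rule robin) (use l_ge in auto)
  have e: "l + 1 - 2 = l - 1" "l + 1 - 1 = l" by auto
  show ?thesis using r Tl_empty unfolding u_def pdA_def e by (simp add: algebra_simps)
qed

lemma u1_pos: "0 < u 1"
proof (rule ccontr)
  assume neg: "\<not> 0 < u 1"
  define g where "g k = (if k = 0 then u 1 else u k)" for k
  define N where "N = l div 2"
  have N: "a + 1 \<le> N" "2 * N \<le> l" "l \<le> 2 * N + 1" using l_ge unfolding N_def by auto
  have rows: "\<rho> * (g (j+1) - 2 * g j + g (j-1)) \<le> 2 * g j + kA (j-1) * (g (j-1) + g j) + kA j * (g j + g (j+1))"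
    if j: "1 \<le> j" "j \<le> N" for j
  proof (cases "j = 1")
    case True
    have "pdA 1 \<le> kA 1 * (u 1 + u 2)" using pdA_le[of 1] l_ge by (simp add: numeral_2_eq_2)
    then show ?thesis using True robinA unfolding g_def by (simp add: kA_def algebra_simps numeral_2_eq_2)
  next
    case False
    then have j2: "2 \<le> j" using j by simp
    have "pdA (j-1) \<le> kA (j-1) * (u (j-1) + u (j-1+1))" using pdA_le[of "j-1"] j2 j N by simp
    moreover have "pdA j \<le> kA j * (u j + u (j+1))" using pdA_le[of j] j2 j N by simp
    moreover have "j - 1 + 1 = j" using j2 by simp
    ultimately show ?thesis using rowA[of j] j2 j N unfolding g_def by simp
  qed
  have s: "g 1 \<le> 0" "g 1 \<le> g 0" "g 0 + g 1 \<le> 0" using neg unfolding g_def by auto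
  have strict: "\<rho> * (g (a+1+1) - 2 * g (a+1) + g (a+1-1)) < 2 * g (a+1) + kA (a+1-1) * (g (a+1-1) + g (a+1)) + kA (a+1) * (g (a+1) + g (a+1+1))"
  proof (cases "a = 0")
    case True
    have "pdA 1 < 0" using pdA_neg[of 1] True l_ge by simp
    moreover have "kA 0 = 0" "kA 1 = 0" unfolding kA_def using True by simp_all
    ultimately show ?thesis using True robinA unfolding g_def by (simp add: algebra_simps numeral_2_eq_2)
  next
    case False
    have "pdA a = kA a * (u a + u (a+1))" using pdA_eq[of a] False unfolding kA_def by simp
    moreover have "pdA (a+1) < 0" using pdA_neg[of "a+1"] l_ge by simp
    moreover have "kA (a+1) = 0" unfolding kA_def by simp
    ultimately show ?thesis using rowA[of "a+1"] False N unfolding g_def by simp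
  qed
  have mono: "g (m+1) \<le> g m \<and> g (m+1) \<le> 0 \<and> g m + g (m+1) \<le> 0" if "m \<le> N" for m
    using shoot[OF kA_nonneg kA_lt rows s] that by blast
  have st: "g (a+2) < g (a+1)"
    using shoot_strict[OF kA_nonneg kA_lt rows s, of "a+1"] strict N by simp
  have "g (N+1) \<le> g (a+2)"
    by (rule dec_chain[of "a+2" "N+1" g]) (use mono N in auto)
  moreover have "g (a+1) \<le> 0" using mono[of a] N by simp
  ultimately have A: "u (N+1) < 0" using st unfolding g_def by simp
  have B: "u N \<le> 0" using mono[of "N-1"] N unfolding g_def by auto
  show False
  proof (cases "l = 2 * N")
    case True
    then have "u (N+1) = - u N" unfolding u_def by simp
    then show False using A B by simp
  next
    case False
    then have "l = 2 * N + 1" using N by simp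
    then have "u (N+1) = 0" unfolding u_def by simp
    then show False using A by simp
  qed
qed

lemma u_incr:
  assumes a1: "1 \<le> a" and j: "1 \<le> j" "j \<le> a"
  shows "u j < u (j+1)"
proof -
  define g where "g k = - (if k = 0 then u 1 else u k)" for k
  have kA1: "kA 1 = kp" "kA 0 = 0" using a1 unfolding kA_def by auto
  have rows: "\<rho> * (g (j+1) - 2 * g j + g (j-1)) \<le> 2 * g j + kA (j-1) * (g (j-1) + g j) + kA j * (g j + g (j+1))"
    if j: "1 \<le> j" "j \<le> a" for j
  proof (cases "j = 1")
    case True
    have "pdA 1 = kp * (u 1 + u 2)" using pdA_eq[of 1] a1 by (simp add: numeral_2_eq_2)
    then show ?thesis using True robinA kA1 unfolding g_def by (simp add: algebra_simps numeral_2_eq_2)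
  next
    case False
    then have j2: "2 \<le> j" using j by simp
    have jj: "1 \<le> j - 1" "j - 1 \<le> a" using j2 j by auto
    have "pdA (j-1) = kA (j-1) * (u (j-1) + u (j-1+1))" using pdA_eq[OF jj] jj unfolding kA_def by simp
    moreover have "pdA j = kA j * (u j + u (j+1))" using pdA_eq[of j] j2 j unfolding kA_def by simp
    moreover have "j - 1 + 1 = j" using j2 by simp
    moreover have "2 * j \<le> l" using j l_ge by simp
    ultimately show ?thesis using rowA[of j] j2 j unfolding g_def by (simp add: algebra_simps)
  qed
  have s: "g 1 \<le> 0" "g 1 \<le> g 0" "g 0 + g 1 \<le> 0" using u1_pos unfolding g_def by auto
  have "g (j+1) < g j"
    using shoot_strict[OF kA_nonneg kA_lt rows s j] u1_pos unfolding g_def by simp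
  then show ?thesis using j unfolding g_def by simp
qed

lemma u_pos: "1 \<le> j \<Longrightarrow> j \<le> a + 1 \<Longrightarrow> 0 < u j"
proof -
  assume j: "1 \<le> j" "j \<le> a + 1"
  show "0 < u j"
  proof (cases "j = 1")
    case True then show ?thesis using u1_pos by simp
  next
    case False
    then have a1: "1 \<le> a" using j by simp
    have st: "(\<lambda>k. - u k) (k+1) \<le> (\<lambda>k. - u k) k" if "1 \<le> k" "k < a + 1" for k
      using u_incr[OF a1, of k] that by simp
    have "(\<lambda>k. - u k) j \<le> (\<lambda>k. - u k) 1"
      by (rule dec_chain[of 1 "a+1"]) (use st j in auto)
    then show ?thesis using u1_pos by simp
  qed
qed

lemma part_i:
  assumes a1: "1 \<le> a" and i: "1 \<le> i" "i \<le> a"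
  shows "x (V i) - x (V (l + 1 - i)) < x (V (i + 1)) - x (V (l - i))"
    "x (W i) - x (W (l - i)) < x (V (i + 1)) - x (V (l - i))"
proof -
  have e: "l + 1 - (i + 1) = l - i" by simp
  have ui: "u i < u (i+1)" using u_incr[OF a1 i] .
  then show "x (V i) - x (V (l + 1 - i)) < x (V (i + 1)) - x (V (l - i))"
    unfolding u_def y_def e by simp
  have up: "0 < u (i+1)" using u_pos[of "i+1"] i by simp
  have I1: "i \<in> tI n a b" using i by (simp add: memI)
  have I2: "l - i \<in> tI n a b" using i l_ge unfolding memI by arith
  have q: "z i - z (l - i) = kp * (u i + u (i+1))"
    using pdA_eq[OF i] I1 I2 unfolding pdA_def zI_def by simp
  have "kp * (u i + u (i+1)) < kp * (2 * u (i+1))" using ui kp_pos by simp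
  also have "\<dots> = (2 * kp) * u (i+1)" by simp
  also have "\<dots> < 1 * u (i+1)" using kp_half up by (intro mult_strict_right_mono) auto
  finally have "z i - z (l - i) < u (i+1)" using q by simp
  then show "x (W i) - x (W (l - i)) < x (V (i + 1)) - x (V (l - i))"
    unfolding u_def y_def z_def e by simp
qed

end

context hyp
begin

definition "cc = l + a + 2 - b"
definition "f j = y j - y (cc - j)"
definition "hh = (cc + 1) div 2"
definition "kf i = (if 1 \<le> i \<and> i \<le> a then kp else 0)"
definition "pdB i = zI i - zI (cc - 1 - i)"

lemma cc_facts: "a + b + 3 \<le> cc" "cc \<le> l" "2 * a + 5 \<le> cc" "cc + 2 * b \<le> 2 * l" using l_ge unfolding cc_def by auto

lemma hh_facts: "a + 3 \<le> hh" "cc \<le> 2 * hh" "2 * hh \<le> cc + 1"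
  using cc_facts unfolding hh_def by auto

lemma kf_nonneg: "0 \<le> kf i" and kf_lt: "kf i < \<rho>"
  unfolding kf_def using kp_pos kp_lt rho_pos by auto

lemma pdB_eq: "1 \<le> i \<Longrightarrow> i \<le> a \<Longrightarrow> pdB i = kp * (f i + f (i+1))"
proof -
  assume i: "1 \<le> i" "i \<le> a"
  have I1: "i \<in> tI n a b" using i by (simp add: memI)
  have I2: "cc - 1 - i \<in> tI n a b" using i l_ge cc_facts unfolding memI cc_def by arith
  have "z i - z (cc - 1 - i) = kp * ((y i - y (cc - i)) + (y (i+1) - y (cc - 1 - i)))"
    by (rule pdiff[OF I1 I2]) (use i cc_facts in auto)
  moreover have "cc - (i + 1) = cc - 1 - i" by simp
  ultimately show ?thesis using I1 I2 unfolding pdB_def f_def zI_def by simp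
qed

lemma pdB_neg: "pdB (a+1) < 0"
proof -
  have "a + 1 \<notin> tI n a b" using l_ge unfolding memI by arith
  moreover have "cc - 1 - (a+1) \<in> tI n a b" using l_ge unfolding memI cc_def by arith
  ultimately show ?thesis unfolding pdB_def using zI_pos[of "cc - 1 - (a+1)"] unfolding zI_def by simp
qed

lemma pdB_zero: "a + 2 \<le> i \<Longrightarrow> 2 * i < cc \<Longrightarrow> pdB i = 0"
proof -
  assume i: "a + 2 \<le> i" "2 * i < cc"
  have "i \<notin> tI n a b" using i l_ge cc_facts unfolding memI cc_def by arith
  moreover have "cc - 1 - i \<notin> tI n a b" using i l_ge cc_facts unfolding memI cc_def by arith
  ultimately show ?thesis unfolding pdB_def zI_def by simp
qed

lemma pdB_le: "1 \<le> i \<Longrightarrow> 2 * i < cc \<Longrightarrow> pdB i \<le> kf i * (f i + f (i+1))"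
proof -
  assume i: "1 \<le> i" "2 * i < cc"
  consider "i \<le> a" | "i = a + 1" | "a + 2 \<le> i" by arith
  then show ?thesis
  proof cases
    case 1 then show ?thesis using pdB_eq i unfolding kf_def by simp
  next
    case 2 then show ?thesis using pdB_neg unfolding kf_def by simp
  next
    case 3 then show ?thesis using pdB_zero i unfolding kf_def by simp
  qed
qed

lemma rowB:
  assumes "2 \<le> j" "2 * j < cc"
  shows "\<rho> * (f (j+1) - 2 * f j + f (j-1)) = 2 * f j + pdB (j-1) + pdB j"
proof -
  have r: "\<rho> * ((y (j+1) - y (cc - (j+1))) - 2 * (y j - y (cc - j)) + (y (j-1) - y (cc - (j-1))))
    = 2 * (y j - y (cc - j)) + (zI (j-1) - zI (cc - j)) + (zI j - zI (cc - (j+1)))"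
    by (rule rowR) (use assms cc_facts in auto)
  have e: "cc - 1 - (j - 1) = cc - j" "cc - (j+1) = cc - 1 - j" using assms by auto
  show ?thesis using r unfolding f_def pdB_def e by simp
qed

lemma Tl_pos: "c \<le> l \<Longrightarrow> 0 < Tl c"
proof -
  assume c: "c \<le> l"
  have ynn: "0 \<le> (if c \<le> k then y k else 0)" if "k \<in> {1..l}" for k using ypos[of k] that by auto
  have "(if c \<le> l then y l else 0) \<le> (\<Sum>k\<in>{1..l}. if c \<le> k then y k else 0)"
    by (rule member_le_sum) (use l_ge ynn in auto)
  moreover have "0 < y l" using ypos l_ge by auto
  moreover have "0 \<le> (\<Sum>i\<in>{1..<l}. if c - 1 \<le> i then zI i else 0)" by (rule sum_nonneg) (simp add: zI_nonneg)
  ultimately show ?thesis unfolding Tl_def using c by simp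
qed

lemma robinB: "\<rho> * (f 2 - f 1) = 2 * f 1 + pdB 1 - 2 * Tl cc"
proof -
  have r: "\<rho> * ((y 2 - y 1) + (y (cc - 1) - y (cc - 2))) = 2 * (y 1 - y (cc - 1)) + zI 1 - zI (cc - 2) - 2 * Tl cc"
    by (rule robin) (use cc_facts in auto)
  have e: "cc - 1 - 1 = cc - 2" by simp
  show ?thesis using r unfolding f_def pdB_def e by (simp add: algebra_simps)
qed

lemma center_f: "f hh = 0 \<or> f hh = - f (hh - 1)"
proof (cases "cc = 2 * hh")
  case True then show ?thesis unfolding f_def by simp
next
  case False
  then have "cc + 1 = 2 * hh" using hh_facts by simp
  then have "cc - hh = hh - 1" "cc - (hh - 1) = hh" by auto
  then show ?thesis unfolding f_def by simp
qed

lemma f_near_pos: "0 < f (hh - 1)"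
proof (rule ccontr)
  assume neg: "\<not> 0 < f (hh - 1)"
  define g where "g k = (if k < hh then f (hh - k) else f 1)" for k
  define kB where "kB k = kf (hh - k - 1)" for k
  have kB0: "\<And>i. 0 \<le> kB i" and kBr: "\<And>i. kB i < \<rho>" unfolding kB_def using kf_nonneg kf_lt by auto
  have H: "a + 3 \<le> hh" "cc \<le> 2 * hh" "2 * hh \<le> cc + 1" by (rule hh_facts)+
  have rowsS: "\<rho> * (g (k+1) - 2 * g k + g (k-1)) \<le> 2 * g k + kB (k-1) * (g (k-1) + g k) + kB k * (g k + g (k+1))
     \<and> (k = hh - 1 \<longrightarrow> \<rho> * (g (k+1) - 2 * g k + g (k-1)) < 2 * g k + kB (k-1) * (g (k-1) + g k) + kB k * (g k + g (k+1)))"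
    if k: "1 \<le> k" "k \<le> hh - 1" for k
  proof (cases "k = hh - 1")
    case True
    have g: "g (k+1) = f 1" "g k = f 1" "g (k-1) = f 2" using True H unfolding g_def by auto
    have kk: "kB (k-1) = kf 1" "kB k = kf 0" using True H unfolding kB_def by auto
    have kf0: "kf 0 = 0" unfolding kf_def by simp
    have c1: "2 * 1 < cc" using cc_facts(3) by simp
    have p0: "pdB 1 \<le> kf 1 * (f 1 + f (1+1))" by (rule pdB_le[OF order.refl c1])
    have p: "pdB 1 \<le> kf 1 * (f 1 + f 2)" using p0 by (simp only: one_add_one)
    have t: "0 < Tl cc" by (rule Tl_pos[OF cc_facts(2)])
    have L: "\<rho> * (g (k+1) - 2 * g k + g (k-1)) = 2 * f 1 + pdB 1 - 2 * Tl cc"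
    proof -
      have "f 1 - 2 * f 1 + f 2 = f 2 - f 1" by simp
      then show ?thesis unfolding g using robinB by simp
    qed
    have R: "2 * g k + kB (k-1) * (g (k-1) + g k) + kB k * (g k + g (k+1)) = 2 * f 1 + kf 1 * (f 1 + f 2)"
      unfolding g kk kf0 by (simp add: add.commute)
    show ?thesis using L R p t by linarith
  next
    case False
    define j where "j = hh - k"
    have j: "2 \<le> j" "2 * j < cc" "j + k = hh" using k False H unfolding j_def by auto
    have g: "g (k+1) = f (j-1)" "g k = f j" "g (k-1) = f (j+1)" using k False H j unfolding g_def j_def
      by (auto simp: Suc_diff_Suc Suc_diff_le)
    have kk: "kB (k-1) = kf j" "kB k = kf (j-1)" using k j unfolding kB_def j_def by auto
    have p1: "pdB (j-1) \<le> kf (j-1) * (f (j-1) + f j)" using pdB_le[of "j-1"] j by simp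
    have p2: "pdB j \<le> kf j * (f j + f (j+1))" using pdB_le[of j] j by simp
    show ?thesis using rowB[OF j(1) j(2)] p1 p2 False unfolding g kk by (simp add: algebra_simps)
  qed
  have rows: "\<rho> * (g (k+1) - 2 * g k + g (k-1)) \<le> 2 * g k + kB (k-1) * (g (k-1) + g k) + kB k * (g k + g (k+1))"
    if "1 \<le> k" "k \<le> hh - 1" for k using rowsS[OF that] by blast
  have s: "g 1 \<le> 0" "g 1 \<le> g 0" "g 0 + g 1 \<le> 0" using neg center_f H unfolding g_def by auto
  have h1: "1 \<le> hh - 1" using H by simp
  have "g (hh - 1 + 1) < g (hh - 1)"
    using shoot_strict[OF kB0 kBr rows s h1 order.refl] rowsS[OF h1 order.refl] by blast
  moreover have "g (hh - 1 + 1) = g (hh - 1)" using H unfolding g_def by auto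
  ultimately show False by simp
qed

lemma f_decr:
  assumes "a + 3 \<le> j" "j \<le> hh - 1"
  shows "f j < f (j - 1)" "0 < f j"
proof -
  define g where "g k = - (if k < hh then f (hh - k) else f 1)" for k
  have H: "a + 3 \<le> hh" "cc \<le> 2 * hh" "2 * hh \<le> cc + 1" by (rule hh_facts)+
  have zero: "\<And>i. 0 \<le> (0::real)" "\<And>i. (0::real) < \<rho>" using rho_pos by auto
  have rows: "\<rho> * (g (k+1) - 2 * g k + g (k-1)) \<le> 2 * g k + (\<lambda>_. 0) (k-1) * (g (k-1) + g k) + (\<lambda>_. 0) k * (g k + g (k+1))"
    if k: "1 \<le> k" "k \<le> hh - a - 3" for k
  proof -
    define jj where "jj = hh - k"
    have j: "2 \<le> jj" "2 * jj < cc" "a + 3 \<le> jj" using k H unfolding jj_def by auto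
    have g: "g (k+1) = - f (jj-1)" "g k = - f jj" "g (k-1) = - f (jj+1)" using k H j unfolding g_def jj_def
      by (auto simp: Suc_diff_Suc Suc_diff_le)
    have "pdB (jj-1) = 0" "pdB jj = 0" using pdB_zero j by auto
    then show ?thesis using rowB[OF j(1) j(2)] unfolding g by (simp add: algebra_simps)
  qed
  have fp: "0 < f (hh - 1)" by (rule f_near_pos)
  have s: "g 1 \<le> 0" "g 1 \<le> g 0" "g 0 + g 1 \<le> 0" using fp center_f H unfolding g_def by auto
  have st: "g (k+1) < g k" if "1 \<le> k" "k \<le> hh - a - 3" for k
    using shoot_strict[OF _ _ rows s that] fp H rho_pos unfolding g_def by auto
  define k where "k = hh - j"
  have k: "1 \<le> k" "k \<le> hh - a - 3" using assms H unfolding k_def by auto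
  have "g (k+1) < g k" using st k by simp
  moreover have "g (k+1) = - f (j - 1)" "g k = - f j" using assms H unfolding g_def k_def by auto
  ultimately show "f j < f (j - 1)" by simp
  have "g k \<le> g 1"
    by (rule dec_chain[of 1 "hh - a - 2"]) (use st k in \<open>auto intro: less_imp_le\<close>)
  moreover have "g 1 = - f (hh - 1)" using H unfolding g_def by auto
  ultimately show "0 < f j" using fp \<open>g k = - f j\<close> by simp
qed

end

lemma invol_sum:
  fixes g :: "nat \<Rightarrow> real"
  assumes "\<And>k. k \<in> A \<Longrightarrow> \<tau> k \<in> A" "\<And>k. k \<in> A \<Longrightarrow> \<tau> (\<tau> k) = k"
  shows "2 * sum g A = (\<Sum>k\<in>A. g k + g (\<tau> k))"
proof -
  have "sum g A = sum (\<lambda>k. g (\<tau> k)) A"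
    by (rule sum.reindex_bij_witness[where i=\<tau> and j=\<tau>]) (auto simp: assms)
  then show ?thesis by (simp add: sum.distrib)
qed

context hyp
begin

definition "cs = l - b + 1"
definition "ct = l - a"
definition "c3 = cs + ct"
definition "F3 j = y j - y (c3 - j)"
definition "h3 = (c3 + 1) div 2"
definition "pd3 i = zI i - zI (c3 - 1 - i)"

lemma cst: "a + 2 \<le> cs" "cs + 1 \<le> ct" "ct + a = l" "cs + b = l + 1" "c3 = cs + ct"
  using l_ge unfolding cs_def ct_def c3_def by auto

lemma h3_facts: "cs + 1 \<le> h3" "c3 \<le> 2 * h3" "2 * h3 \<le> c3 + 1"
  using cst unfolding h3_def by auto

lemma pd3_eq: "cs \<le> i \<Longrightarrow> i + 1 \<le> ct \<Longrightarrow> pd3 i = kp * (F3 i + F3 (i+1))"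
proof -
  assume i: "cs \<le> i" "i + 1 \<le> ct"
  have I1: "i \<in> tI n a b" using i cst unfolding memI by arith
  have I2: "c3 - 1 - i \<in> tI n a b" using i cst unfolding memI by arith
  have "z i - z (c3 - 1 - i) = kp * ((y i - y (c3 - i)) + (y (i+1) - y (c3 - 1 - i)))"
    by (rule pdiff[OF I1 I2]) (use i cst in auto)
  moreover have "c3 - (i + 1) = c3 - 1 - i" by simp
  ultimately show ?thesis using I1 I2 unfolding pd3_def F3_def zI_def by simp
qed

lemma rowC:
  assumes "cs + 1 \<le> j" "2 * j < c3"
  shows "\<rho> * (F3 (j+1) - 2 * F3 j + F3 (j-1)) = 2 * F3 j + kp * (F3 (j-1) + F3 j) + kp * (F3 j + F3 (j+1))"
proof -
  have r: "\<rho> * ((y (j+1) - y (c3 - (j+1))) - 2 * (y j - y (c3 - j)) + (y (j-1) - y (c3 - (j-1))))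
    = 2 * (y j - y (c3 - j)) + (zI (j-1) - zI (c3 - j)) + (zI j - zI (c3 - (j+1)))"
    by (rule rowR) (use assms cst in auto)
  have e: "c3 - 1 - (j - 1) = c3 - j" "c3 - (j+1) = c3 - 1 - j" using assms cst by auto
  have p1: "pd3 (j-1) = kp * (F3 (j-1) + F3 (j-1+1))" by (rule pd3_eq) (use assms cst in auto)
  have p2: "pd3 j = kp * (F3 j + F3 (j+1))" by (rule pd3_eq) (use assms cst in auto)
  have jj: "j - 1 + 1 = j" using assms cst by auto
  have "\<rho> * (F3 (j+1) - 2 * F3 j + F3 (j-1)) = 2 * F3 j + pd3 (j-1) + pd3 j"
    using r unfolding F3_def pd3_def e by simp
  then show ?thesis using p1 p2 unfolding jj by simp
qed

lemma center3: "F3 h3 = 0 \<or> F3 h3 = - F3 (h3 - 1)"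
proof (cases "c3 = 2 * h3")
  case True then show ?thesis unfolding F3_def by simp
next
  case False
  then have "c3 + 1 = 2 * h3" using h3_facts by simp
  then have "c3 - h3 = h3 - 1" "c3 - (h3 - 1) = h3" by auto
  then show ?thesis unfolding F3_def by simp
qed

lemma shootC:
  assumes "(\<forall>k. g k = F3 (h3 - k)) \<or> (\<forall>k. g k = - F3 (h3 - k))"
    and "1 \<le> k" "k \<le> h3 - cs - 1"
  shows "\<rho> * (g (k+1) - 2 * g k + g (k-1)) \<le> 2 * g k + (\<lambda>_. kp) (k-1) * (g (k-1) + g k) + (\<lambda>_. kp) k * (g k + g (k+1))"
proof -
  define j where "j = h3 - k"
  have j: "cs + 1 \<le> j" "2 * j < c3" using assms(2,3) h3_facts unfolding j_def by auto
  have e: "h3 - (k+1) = j - 1" "h3 - k = j" "h3 - (k - 1) = j + 1" using assms(2,3) h3_facts unfolding j_def by auto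
  from assms(1) show ?thesis
  proof
    assume g: "\<forall>k. g k = F3 (h3 - k)"
    show ?thesis using rowC[OF j] unfolding g[rule_format] e by (simp add: algebra_simps)
  next
    assume g: "\<forall>k. g k = - F3 (h3 - k)"
    show ?thesis using rowC[OF j] unfolding g[rule_format] e by (simp add: algebra_simps)
  qed
qed

lemma F3_case_neg: "F3 (h3 - 1) < 0 \<Longrightarrow> y cs < y ct"
proof -
  assume neg: "F3 (h3 - 1) < 0"
  define g where "g k = F3 (h3 - k)" for k
  define N where "N = h3 - cs - 1"
  have rows: "\<rho> * (g (k+1) - 2 * g k + g (k-1)) \<le> 2 * g k + (\<lambda>_. kp) (k-1) * (g (k-1) + g k) + (\<lambda>_. kp) k * (g k + g (k+1))"
    if "1 \<le> k" "k \<le> N" for k using shootC[of g k] that unfolding g_def N_def by simp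
  have k0: "\<And>i. 0 \<le> (\<lambda>_. kp) i" and kr: "\<And>i. (\<lambda>_. kp) i < \<rho>" using kp_pos kp_lt by auto
  have s: "g 1 \<le> 0" "g 1 \<le> g 0" "g 0 + g 1 \<le> 0" using neg center3 unfolding g_def by auto
  have m: "g (m+1) \<le> g m" if "m \<le> N" for m using shoot[OF k0 kr rows s that] by blast
  have "g (N+1) \<le> g 1" by (rule dec_chain[of 1 "N+1"]) (use m in auto)
  moreover have "g (N+1) = y cs - y ct" using h3_facts cst unfolding g_def N_def F3_def by auto
  ultimately show ?thesis using neg unfolding g_def by simp
qed

lemma F3_nonneg_aux: "0 \<le> F3 (h3 - 1) \<Longrightarrow> cs \<le> j \<Longrightarrow> j \<le> h3 - 1 \<Longrightarrow> 0 \<le> F3 j"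
proof -
  assume pos: "0 \<le> F3 (h3 - 1)" and j: "cs \<le> j" "j \<le> h3 - 1"
  define g where "g k = - F3 (h3 - k)" for k
  define N where "N = h3 - cs - 1"
  have rows: "\<rho> * (g (k+1) - 2 * g k + g (k-1)) \<le> 2 * g k + (\<lambda>_. kp) (k-1) * (g (k-1) + g k) + (\<lambda>_. kp) k * (g k + g (k+1))"
    if "1 \<le> k" "k \<le> N" for k using shootC[of g k] that unfolding g_def N_def by simp
  have k0: "\<And>i. 0 \<le> (\<lambda>_. kp) i" and kr: "\<And>i. (\<lambda>_. kp) i < \<rho>" using kp_pos kp_lt by auto
  have s: "g 1 \<le> 0" "g 1 \<le> g 0" "g 0 + g 1 \<le> 0" using pos center3 unfolding g_def by auto
  define m where "m = h3 - j - 1"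
  have mN: "m \<le> N" using j h3_facts unfolding m_def N_def by auto
  have "g (m+1) \<le> 0" using shoot[OF k0 kr rows s mN] by blast
  moreover have "h3 - (m + 1) = j" using j h3_facts unfolding m_def by auto
  ultimately show ?thesis unfolding g_def by simp
qed

lemma F3_nonneg: "0 \<le> F3 (h3 - 1) \<Longrightarrow> cs \<le> j \<Longrightarrow> 2 * j \<le> c3 \<Longrightarrow> 0 \<le> F3 j"
proof -
  assume pos: "0 \<le> F3 (h3 - 1)" and j: "cs \<le> j" "2 * j \<le> c3"
  show ?thesis
  proof (cases "2 * j = c3")
    case True then have "c3 - j = j" by simp
    then show ?thesis unfolding F3_def by simp
  next
    case False then have "j \<le> h3 - 1" using j h3_facts by auto
    then show ?thesis using F3_nonneg_aux pos j by simp
  qed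
qed

end

context hyp
begin

definition "cVf k = real (dd (V ct) (V k)) - real (dd (V cs) (V k))"
definition "cWf i = real (dd (V ct) (W i)) - real (dd (V cs) (W i))"
definition "tauV k = (if k \<le> a + 1 \<or> ct \<le> k then l + 1 - k else if cs < k \<and> k < ct then c3 - k else k)"
definition "tauW i = (if i \<le> a \<or> ct \<le> i then l - i else if cs \<le> i \<and> i < ct then c3 - 1 - i else i)"

lemma cV_lo: "k \<le> cs \<Longrightarrow> cVf k = real ct - real cs"
  using cst unfolding cVf_def by (auto simp: ddVV abs_if)
lemma cV_hi: "ct \<le> k \<Longrightarrow> cVf k = real cs - real ct"
  using cst unfolding cVf_def by (auto simp: ddVV abs_if)
lemma cV_mid: "cs \<le> k \<Longrightarrow> k \<le> ct \<Longrightarrow> cVf k = real cs + real ct - 2 * real k"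
  using cst unfolding cVf_def by (auto simp: ddVV abs_if)
lemma cW_lo: "i < cs \<Longrightarrow> cWf i = real ct - real cs"
  using cst unfolding cWf_def by (auto simp: ddVW)
lemma cW_hi: "ct \<le> i \<Longrightarrow> cWf i = real cs - real ct"
  using cst unfolding cWf_def by (auto simp: ddVW)
lemma cW_mid: "cs \<le> i \<Longrightarrow> i < ct \<Longrightarrow> cWf i = real cs + real ct - 1 - 2 * real i"
  using cst unfolding cWf_def by (auto simp: ddVW)

lemma tauV: "k \<in> {1..l} \<Longrightarrow> tauV k \<in> {1..l} \<and> tauV (tauV k) = k"
  using cst unfolding tauV_def by auto

lemma tauW: "i \<in> {1..<l} \<Longrightarrow> tauW i \<in> {1..<l} \<and> tauW (tauW i) = i"
  using cst unfolding tauW_def by auto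

lemma termV_nonneg:
  assumes pos: "0 \<le> F3 (h3 - 1)" and k: "k \<in> {1..l}"
  shows "0 \<le> cVf k * y k + cVf (tauV k) * y (tauV k)"
proof -
  have d: "0 < real ct - real cs" using cst by simp
  consider "k \<le> a + 1" | "ct \<le> k" | "cs < k \<and> k < ct" | "a + 1 < k \<and> k \<le> cs" using cst by arith
  then show ?thesis
  proof cases
    case 1
    have t: "tauV k = l + 1 - k" unfolding tauV_def using 1 by simp
    have c1: "cVf k = real ct - real cs" using 1 cst by (intro cV_lo) simp
    have c2: "cVf (l + 1 - k) = real cs - real ct" using 1 cst by (intro cV_hi) simp
    have "0 < u k" using u_pos 1 k by simp
    then have "0 \<le> (real ct - real cs) * u k" using d by simp
    then show ?thesis unfolding t c1 c2 u_def by (simp add: algebra_simps)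
  next
    case 2
    have t: "tauV k = l + 1 - k" unfolding tauV_def using 2 by simp
    have c1: "cVf k = real cs - real ct" using 2 by (intro cV_hi) simp
    have c2: "cVf (l + 1 - k) = real ct - real cs" using 2 cst k by (intro cV_lo) simp
    have "0 < u (l + 1 - k)" using u_pos[of "l + 1 - k"] 2 k cst by simp
    moreover have "l + 1 - (l + 1 - k) = k" using k by simp
    ultimately have "0 \<le> (real ct - real cs) * (y (l + 1 - k) - y k)" using d unfolding u_def by simp
    then show ?thesis unfolding t c1 c2 by (simp add: algebra_simps)
  next
    case 3
    have t: "tauV k = c3 - k" unfolding tauV_def using 3 cst by auto
    have c1: "cVf k = real cs + real ct - 2 * real k" using 3 by (intro cV_mid) auto
    have c2: "cVf (c3 - k) = real cs + real ct - 2 * real (c3 - k)" using 3 cst by (intro cV_mid) auto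
    have rc: "real (c3 - k) = real cs + real ct - real k" using 3 cst by (simp add: of_nat_diff)
    have cc: "c3 - (c3 - k) = k" using 3 cst by auto
    show ?thesis
    proof (cases "2 * k \<le> c3")
      case True
      have "0 \<le> F3 k" using F3_nonneg[OF pos _ True] 3 by simp
      moreover have "0 \<le> real cs + real ct - 2 * real k" using True cst by simp
      ultimately have "0 \<le> (real cs + real ct - 2 * real k) * F3 k" by simp
      then show ?thesis unfolding t c1 c2 rc F3_def by (simp add: algebra_simps)
    next
      case False
      have "0 \<le> F3 (c3 - k)" using F3_nonneg[OF pos] 3 False cst by simp
      moreover have "0 \<le> 2 * real k - real cs - real ct" using False cst by simp
      ultimately have "0 \<le> (2 * real k - real cs - real ct) * F3 (c3 - k)" by simp
      then show ?thesis unfolding t c1 c2 rc F3_def cc by (simp add: algebra_simps)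
    qed
  next
    case 4
    have t: "tauV k = k" unfolding tauV_def using 4 cst by auto
    have c1: "cVf k = real ct - real cs" using 4 by (intro cV_lo) simp
    have "0 < y k" using ypos k by simp
    then show ?thesis unfolding t c1 using d by simp
  qed
qed

lemma termV_pos: "0 < cVf cs * y cs + cVf (tauV cs) * y (tauV cs)"
proof -
  have t: "tauV cs = cs" unfolding tauV_def using cst by auto
  have c1: "cVf cs = real ct - real cs" by (intro cV_lo) simp
  have "0 < y cs" using ypos cst l_ge by simp
  then show ?thesis unfolding t c1 using cst by simp
qed

lemma termW_nonneg:
  assumes pos: "0 \<le> F3 (h3 - 1)" and i: "i \<in> {1..<l}"
  shows "0 \<le> cWf i * zI i + cWf (tauW i) * zI (tauW i)"
proof -
  have d: "0 < real ct - real cs" using cst by simp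
  have pdA_nn: "0 \<le> pdA j" if "1 \<le> j" "j \<le> a" for j
  proof -
    have "0 < u j" "0 < u (j+1)" using u_pos that by auto
    then show ?thesis using pdA_eq[OF that] kp_pos by simp
  qed
  have pd3_nn: "0 \<le> pd3 j" if "cs \<le> j" "2 * j + 1 < c3" for j
  proof -
    have "0 \<le> F3 j" "0 \<le> F3 (j+1)" using F3_nonneg[OF pos] that by auto
    moreover have "j + 1 \<le> ct" using that cst by simp
    ultimately show ?thesis using pd3_eq[of j] that kp_pos by simp
  qed
  consider "i \<le> a" | "ct \<le> i" | "cs \<le> i \<and> i < ct" | "a < i \<and> i < cs" using cst by arith
  then show ?thesis
  proof cases
    case 1
    have t: "tauW i = l - i" unfolding tauW_def using 1 by simp
    have c1: "cWf i = real ct - real cs" using 1 cst by (intro cW_lo) simp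
    have c2: "cWf (l - i) = real cs - real ct" using 1 cst by (intro cW_hi) simp
    have "0 \<le> pdA i" using pdA_nn 1 i by simp
    then have "0 \<le> (real ct - real cs) * pdA i" using d by simp
    then show ?thesis unfolding t c1 c2 pdA_def by (simp add: algebra_simps)
  next
    case 2
    have t: "tauW i = l - i" unfolding tauW_def using 2 by simp
    have c1: "cWf i = real cs - real ct" using 2 by (intro cW_hi) simp
    have c2: "cWf (l - i) = real ct - real cs" using 2 cst i by (intro cW_lo) simp
    have "0 \<le> pdA (l - i)" using pdA_nn 2 i cst by simp
    moreover have "l - (l - i) = i" using i by simp
    ultimately have "0 \<le> (real ct - real cs) * (zI (l - i) - zI i)" using d unfolding pdA_def by simp
    then show ?thesis unfolding t c1 c2 by (simp add: algebra_simps)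
  next
    case 3
    have t: "tauW i = c3 - 1 - i" unfolding tauW_def using 3 cst by auto
    have c1: "cWf i = real cs + real ct - 1 - 2 * real i" using 3 by (intro cW_mid) auto
    have c2: "cWf (c3 - 1 - i) = real cs + real ct - 1 - 2 * real (c3 - 1 - i)" using 3 cst by (intro cW_mid) auto
    have rc: "real (c3 - 1 - i) = real cs + real ct - 1 - real i" using 3 cst by (simp add: of_nat_diff)
    have cc: "c3 - 1 - (c3 - 1 - i) = i" using 3 cst by auto
    consider "2 * i + 1 < c3" | "2 * i + 1 = c3" | "c3 < 2 * i + 1" by arith
    then show ?thesis
    proof cases
      case 1
      have "0 \<le> pd3 i" using pd3_nn 3 1 by simp
      moreover have "0 \<le> real cs + real ct - 1 - 2 * real i" using 1 cst by simp
      ultimately have "0 \<le> (real cs + real ct - 1 - 2 * real i) * pd3 i" by simp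
      then show ?thesis unfolding t c1 c2 rc pd3_def by (simp add: algebra_simps)
    next
      case 2
      then have e: "c3 - 1 - i = i" by simp
      have "real (2 * i + 1) = real c3" using 2 by simp
      then have "real cs + real ct - 1 - 2 * real i = 0" using cst by simp
      then show ?thesis unfolding t e c1 by simp
    next
      case 4: 3
      have "0 \<le> pd3 (c3 - 1 - i)" using pd3_nn 3 4 cst by simp
      moreover have "0 \<le> 2 * real i + 1 - real cs - real ct" using 4 cst by simp
      ultimately have "0 \<le> (2 * real i + 1 - real cs - real ct) * pd3 (c3 - 1 - i)" by simp
      then show ?thesis unfolding t c1 c2 rc pd3_def cc by (simp add: algebra_simps)
    qed
  next
    case 4
    have t: "tauW i = i" unfolding tauW_def using 4 cst by auto
    have c1: "cWf i = real ct - real cs" using 4 by (intro cW_lo) simp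
    show ?thesis unfolding t c1 using d zI_nonneg[of i] by simp
  qed
qed

lemma part_iii: "y cs < y ct"
proof (cases "F3 (h3 - 1) < 0")
  case True then show ?thesis by (rule F3_case_neg)
next
  case False
  then have pos: "0 \<le> F3 (h3 - 1)" by simp
  have dir: "\<rho> * (y ct - y cs) = (\<Sum>k\<in>{1..l}. cVf k * y k) + (\<Sum>i\<in>{1..<l}. cWf i * zI i)"
    unfolding cVf_def cWf_def by (rule direct) (use cst in auto)
  have "2 * (\<Sum>k\<in>{1..l}. cVf k * y k) = (\<Sum>k\<in>{1..l}. cVf k * y k + cVf (tauV k) * y (tauV k))"
    by (rule invol_sum) (use tauV in auto)
  also have "\<dots> \<ge> cVf cs * y cs + cVf (tauV cs) * y (tauV cs)"
    by (rule member_le_sum) (use cst l_ge termV_nonneg[OF pos] in auto)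
  finally have V: "0 < (\<Sum>k\<in>{1..l}. cVf k * y k)" using termV_pos by simp
  have "2 * (\<Sum>i\<in>{1..<l}. cWf i * zI i) = (\<Sum>i\<in>{1..<l}. cWf i * zI i + cWf (tauW i) * zI (tauW i))"
    by (rule invol_sum) (use tauW in auto)
  also have "\<dots> \<ge> 0"
    by (rule sum_nonneg) (use termW_nonneg[OF pos] in auto)
  finally have W: "0 \<le> (\<Sum>i\<in>{1..<l}. cWf i * zI i)" by simp
  have "0 < \<rho> * (y ct - y cs)" using dir V W by simp
  then show ?thesis using rho_pos by (simp add: zero_less_mult_iff)
qed

end

context hyp
begin

lemma hh_eq: "hh = (l - b - a - 1) div 2 + a + 2"
proof -
  define m where "m = l - b - a - 1"
  have "cc + 1 = m + 2 * (a + 2)" unfolding cc_def m_def using l_ge by simp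
  then have "(cc + 1) div 2 = m div 2 + (a + 2)" by simp
  then show ?thesis unfolding hh_def m_def by simp
qed

lemma part_ii:
  assumes i: "1 \<le> i" "i \<le> (l - b - a - 1) div 2 - 1"
  shows "x (V (a + 1 + i)) - x (V (l - b + 1 - i)) > x (V (a + 2 + i)) - x (V (l - b - i))"
    "x (V (a + 2 + i)) - x (V (l - b - i)) > 0"
proof -
  have j: "a + 3 \<le> a + 2 + i" "a + 2 + i \<le> hh - 1" using i hh_eq by auto
  have e1: "cc - (a + 2 + i) = l - b - i" "cc - (a + 1 + i) = l - b + 1 - i" "a + 2 + i - 1 = a + 1 + i"
    using i l_ge hh_eq unfolding cc_def by auto
  show "x (V (a + 1 + i)) - x (V (l - b + 1 - i)) > x (V (a + 2 + i)) - x (V (l - b - i))"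
    using f_decr(1)[OF j] unfolding f_def y_def e1 by simp
  show "x (V (a + 2 + i)) - x (V (l - b - i)) > 0"
    using f_decr(2)[OF j] unfolding f_def y_def e1 by simp
qed

end

theorem lemma3p3:
  fixes n a b l :: nat and x :: "vtx \<Rightarrow> real"
  assumes hb: "b \<ge> a + 2"
    and hn: "2 * (a + b) < n - 1"
    and hl: "l = n - a - b"
    and hx: "perron_vector (tVerts n a b) (dist_matrix (tEdges n a b)) x"
    and hbl: "real b < real l / 2"
  shows "(a \<ge> 1 \<longrightarrow> (\<forall>i\<in>{1..a}.
            x (V i) - x (V (l + 1 - i)) < x (V (i + 1)) - x (V (l - i)) \<and>
            x (W i) - x (W (l - i)) < x (V (i + 1)) - x (V (l - i))))
       \<and> (\<forall>i\<in>{1 .. (l - b - a - 1) div 2 - 1}.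
            x (V (a + 1 + i)) - x (V (l - b + 1 - i)) > x (V (a + 2 + i)) - x (V (l - b - i)) \<and>
            x (V (a + 2 + i)) - x (V (l - b - i)) > 0)
       \<and> x (V (l - b + 1)) < x (V (l - a))"
proof -
  obtain \<rho> where pos: "\<forall>v\<in>tVerts n a b. 0 < x v"
    and eq: "\<forall>v\<in>tVerts n a b. (\<Sum>u\<in>tVerts n a b. dist_matrix (tEdges n a b) v u * x u) = \<rho> * x v"
    using hx unfolding perron_vector_def by blast
  have hlb: "2 * b < l" using hbl by linarith
  interpret H: hyp n a b l x \<rho>
    by unfold_locales (use hb hlb hl pos eq in auto)
  have iii: "x (V (l - b + 1)) < x (V (l - a))"
    using H.part_iii unfolding H.cs_def H.ct_def H.y_def .
  have i: "a \<ge> 1 \<longrightarrow> (\<forall>i\<in>{1..a}.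
            x (V i) - x (V (l + 1 - i)) < x (V (i + 1)) - x (V (l - i)) \<and>
            x (W i) - x (W (l - i)) < x (V (i + 1)) - x (V (l - i)))"
  proof (intro impI ballI)
    fix i assume "1 \<le> a" "i \<in> {1..a}"
    then show "x (V i) - x (V (l + 1 - i)) < x (V (i + 1)) - x (V (l - i)) \<and>
            x (W i) - x (W (l - i)) < x (V (i + 1)) - x (V (l - i))"
      using H.part_i[of i] by simp
  qed
  have ii: "\<forall>i\<in>{1 .. (l - b - a - 1) div 2 - 1}.
            x (V (a + 1 + i)) - x (V (l - b + 1 - i)) > x (V (a + 2 + i)) - x (V (l - b - i)) \<and>
            x (V (a + 2 + i)) - x (V (l - b - i)) > 0"
  proof
    fix i assume "i \<in> {1 .. (l - b - a - 1) div 2 - 1}"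
    then show "x (V (a + 1 + i)) - x (V (l - b + 1 - i)) > x (V (a + 2 + i)) - x (V (l - b - i)) \<and>
            x (V (a + 2 + i)) - x (V (l - b - i)) > 0"
      using H.part_ii[of i] by simp
  qed
  show ?thesis using i ii iii by blast
qed

end
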